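(* There exists $N_0$ such that for every integer $n>N_0$, \[ b_{sn+s-1}<b_{sn+s-2}<\cdots<b_{sn+1}<b_n . \] Moreover $b_n\le b_{sn}$ for every $n\ge1$, and $b_n=b_{sn}$ (for any, equivalently all, $n\ge1$) if and only if $h(0)=0$.
   Context: Fix integers $p\ge 3$ and $2\le s<p$, and a set $A\subset\{0,1,\dots,p-1\}$ with $\#A=s$. Let $h:\{0,1,\dots,s-1\}\to A$ be the unique strictly increasing bijection. For a positive integer $n$ with base-$s$ expansion $n=\sum_{i=0}^k\varepsilon_i s^i$ ($\varepsilon_i\in\{0,\dots,s-1\}$, $\varepsilon_k\ne 0$), put $a_n=\sum_{i=0}^k h(\varepsilon_i)p^i$. Let $b_n=a_n/n^{\log_s p}$ for $n\ge1$. *)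

theory Defs
  imports Complex_Main
begin

definition hmap :: "nat set \<Rightarrow> nat \<Rightarrow> nat" where
  "hmap A i = sorted_list_of_set A ! i"

text \<open>a_n = sum_{i=0}^k h(eps_i) p^i where n = sum_{i=0}^k eps_i s^i, eps_k \<noteq> 0.
  The indices 0..k are exactly those i with s^i \<le> n; eps_i = (n div s^i) mod s.\<close>
definition aseq :: "nat \<Rightarrow> nat \<Rightarrow> nat set \<Rightarrow> nat \<Rightarrow> nat" where
  "aseq p s A n = (\<Sum>i\<in>{i. s ^ i \<le> n}. hmap A ((n div s ^ i) mod s) * p ^ i)"

definition bseq :: "nat \<Rightarrow> nat \<Rightarrow> nat set \<Rightarrow> nat \<Rightarrow> real" where
  "bseq p s A n = real (aseq p s A n) / (real n) powr (log (real s) (real p))"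

end

theory Submission
  imports Defs
begin

lemma h_props:
  fixes p s :: nat and A :: "nat set"
  assumes "A \<subseteq> {0..<p}" and "card A = s"
  shows "\<And>i. i < s \<Longrightarrow> hmap A i < p"
    and "\<And>i j. i < j \<Longrightarrow> j < s \<Longrightarrow> hmap A i < hmap A j"
proof -
  have fin: "finite A" using assms(1) finite_subset by blast
  have len: "length (sorted_list_of_set A) = s" using assms(2) by simp
  have st: "sorted_wrt (<) (sorted_list_of_set A)" by (rule strict_sorted_list_of_set)
  show "\<And>i. i < s \<Longrightarrow> hmap A i < p"
  proof -
    fix i assume "i < s"
    then have "sorted_list_of_set A ! i \<in> set (sorted_list_of_set A)" using len by simp
    then have "sorted_list_of_set A ! i \<in> A" using fin by simp
    then show "hmap A i < p" using assms(1) unfolding hmap_def by auto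
  qed
  show "\<And>i j. i < j \<Longrightarrow> j < s \<Longrightarrow> hmap A i < hmap A j"
    unfolding hmap_def using sorted_wrt_nth_less[OF st] len by auto
qed

lemma lt_pow: "2 \<le> (s::nat) \<Longrightarrow> i < s ^ i"
proof -
  assume "2 \<le> s"
  have "i < 2 ^ i" by (rule less_exp)
  also have "(2::nat) ^ i \<le> s ^ i" using \<open>2 \<le> s\<close> by (rule power_mono) simp
  finally show ?thesis .
qed

lemma Iset:
  fixes s n j :: nat
  assumes "2 \<le> s" "j < s" "1 \<le> s * n + j"
  shows "{i. s ^ i \<le> s * n + j} = insert 0 (Suc ` {i. s ^ i \<le> n})"
proof (rule set_eqI, rule iffI)
  fix i assume i: "i \<in> {i. s ^ i \<le> s * n + j}"
  show "i \<in> insert 0 (Suc ` {i. s ^ i \<le> n})"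
  proof (cases i)
    case 0 then show ?thesis by simp
  next
    case (Suc k)
    have "s * s ^ k \<le> s * n + j" using i Suc by simp
    then have "s ^ k \<le> n"
    proof -
      assume h: "s * s ^ k \<le> s * n + j"
      show "s ^ k \<le> n"
      proof (rule ccontr)
        assume "\<not> s ^ k \<le> n"
        then have "n + 1 \<le> s ^ k" by simp
        then have "s * (n+1) \<le> s * s ^ k" by (rule mult_le_mono2)
        then show False using h assms(2) by simp
      qed
    qed
    then show ?thesis using Suc by simp
  qed
next
  fix i assume i: "i \<in> insert 0 (Suc ` {i. s ^ i \<le> n})"
  then show "i \<in> {i. s ^ i \<le> s * n + j}"
  proof
    assume "i = 0" then show ?thesis using assms(3) by simp
  next
    assume "i \<in> Suc ` {i. s ^ i \<le> n}"
    then obtain k where k: "i = Suc k" "s ^ k \<le> n" by auto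
    have "s * s ^ k \<le> s * n" using k(2) by simp
    then have "s * s ^ k \<le> s * n + j" by linarith
    then show ?thesis using k by simp
  qed
qed

lemma finI: "2 \<le> (s::nat) \<Longrightarrow> finite {i. s ^ i \<le> n}"
proof -
  assume s: "2 \<le> s"
  have "{i. s ^ i \<le> n} \<subseteq> {..n}" using lt_pow[OF s] by (auto intro: less_imp_le order.trans)
  then show ?thesis using finite_subset by blast
qed

lemma arec:
  fixes p s n j :: nat
  assumes "2 \<le> s" "j < s" "1 \<le> s * n + j"
  shows "aseq p s A (s * n + j) = p * aseq p s A n + hmap A j"
proof -
  let ?f = "\<lambda>m i. hmap A ((m div s ^ i) mod s) * p ^ i"
  have "aseq p s A (s * n + j) = sum (?f (s*n+j)) (insert 0 (Suc ` {i. s ^ i \<le> n}))"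
    unfolding aseq_def using Iset[OF assms] by simp
  also have "\<dots> = ?f (s*n+j) 0 + sum (?f (s*n+j)) (Suc ` {i. s ^ i \<le> n})"
    using finI[OF assms(1)] by (subst sum.insert) auto
  also have "sum (?f (s*n+j)) (Suc ` {i. s ^ i \<le> n}) = sum (?f (s*n+j) \<circ> Suc) {i. s ^ i \<le> n}"
    by (rule sum.reindex) simp
  also have "\<dots> = sum (\<lambda>i. p * ?f n i) {i. s ^ i \<le> n}"
  proof (rule sum.cong)
    fix i
    have "(s * n + j) div s ^ Suc i = ((s * n + j) div s) div s ^ i"
      by (simp add: div_mult2_eq)
    also have "(s * n + j) div s = n" using assms(1,2) by simp
    finally show "(?f (s*n+j) \<circ> Suc) i = p * ?f n i" by simp
  qed simp
  also have "\<dots> = p * aseq p s A n" unfolding aseq_def by (simp add: sum_distrib_left)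
  finally show ?thesis using assms(2) by simp
qed

lemma apos:
  fixes p s :: nat and A :: "nat set"
  assumes "A \<subseteq> {0..<p}" and "card A = s" and "2 \<le> s" and "1 \<le> p"
  shows "1 \<le> m \<Longrightarrow> 1 \<le> aseq p s A m"
proof (induction m rule: less_induct)
  case (less m)
  define q where "q = m div s"
  define r where "r = m mod s"
  have m: "m = s * q + r" unfolding q_def r_def by simp
  have r: "r < s" unfolding r_def using assms(3) by simp
  have rec: "aseq p s A m = p * aseq p s A q + hmap A r"
    using arec[OF assms(3) r, of q p A] m less.prems by simp
  show ?case
  proof (cases "q = 0")
    case True
    then have "0 < r" using m less.prems by simp
    then have "hmap A 0 < hmap A r" using h_props(2)[OF assms(1,2)] r by blast
    then show ?thesis using rec by simp
  next
    case False
    have "q < m" unfolding q_def using False assms(3) less.prems by (simp add: q_def)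
    then have "1 \<le> aseq p s A q" using less.IH False by simp
    then have "1 \<le> p * aseq p s A q" using assms(4) by (simp add: one_le_mult_iff)
    then show ?thesis using rec by linarith
  qed
qed

lemma alow:
  fixes p s :: nat and A :: "nat set"
  assumes "A \<subseteq> {0..<p}" and "card A = s" and "2 \<le> s" and "1 \<le> p"
  shows "s ^ k \<le> m \<Longrightarrow> p ^ k \<le> aseq p s A m"
proof (induction k arbitrary: m)
  case 0
  then show ?case using apos[OF assms] by simp
next
  case (Suc k)
  define q where "q = m div s"
  define r where "r = m mod s"
  have m: "m = s * q + r" unfolding q_def r_def by simp
  have r: "r < s" unfolding r_def using assms(3) by simp
  have "(s * s ^ k) div s \<le> m div s" using Suc.prems by (intro div_le_mono) simp
  then have "s ^ k \<le> q" using assms(3) by (simp add: q_def)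
  then have ih: "p ^ k \<le> aseq p s A q" using Suc.IH by simp
  have "1 \<le> s ^ Suc k" using assms(3) by (simp only: one_le_power)
  then have "1 \<le> m" using Suc.prems by linarith
  then have rec: "aseq p s A m = p * aseq p s A q + hmap A r"
    using arec[OF assms(3) r, of q p A] m by simp
  have "p ^ Suc k \<le> p * aseq p s A q" using ih by (simp add: mult_le_mono2)
  then show ?case using rec by linarith
qed

lemma R1:
  fixes x a :: real
  assumes "0 < x" "1 < a"
  shows "x powr a * (x + 1) < (x + 1) powr a * x"
proof -
  have b: "1 < (x + 1) / x" using assms by simp
  have "((x+1)/x) powr 1 < ((x+1)/x) powr a" using powr_less_mono[OF assms(2) b] .
  then have "(x+1)/x < (x+1) powr a / x powr a" using assms by (simp add: powr_divide)
  moreover have "0 < x powr a" using assms by simp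
  ultimately show ?thesis using assms by (simp add: field_simps)
qed

lemma ineq1:
  fixes c X h0 h1 a :: real
  assumes "0 < X" "1 < a" "0 < c" "0 \<le> h0" "h1 * X \<le> c"
  shows "(c + h1) / (X + 1) powr a < (c + h0) / X powr a"
proof -
  define P where "P = X powr a"
  define Q where "Q = (X + 1) powr a"
  have P: "0 < P" "0 < Q" unfolding P_def Q_def using assms by auto
  have r: "P * (X + 1) < Q * X" unfolding P_def Q_def using R1[OF assms(1,2)] .
  have "0 \<le> X * h0" using assms by simp
  moreover have "(c + h0) * (X + 1) - (c + h1) * X = c + h0 + X * h0 - h1 * X" by (simp add: algebra_simps)
  ultimately have "(c + h1) * X \<le> (c + h0) * (X + 1)" using assms by linarith
  then have "(c + h1) * X * P \<le> (c + h0) * (X + 1) * P" using P by (simp add: mult_right_mono)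
  also have "\<dots> < (c + h0) * (Q * X)" using r assms
    by (metis mult.assoc mult.commute add_pos_nonneg mult_strict_left_mono)
  finally have "(c + h1) * P * X < (c + h0) * Q * X" by (simp add: algebra_simps)
  then have "(c + h1) * P < (c + h0) * Q" using assms(1) by simp
  then show ?thesis using P by (simp add: P_def Q_def field_simps)
qed

lemma ineq2:
  fixes c X h1 a N A p :: real
  assumes "0 < X" "1 < a" "0 < A" "0 < N" "X powr a = p * N" "h1 * X \<le> p * A"
  shows "(p * A + h1) / (X + 1) powr a < A / N"
proof -
  define Q where "Q = (X + 1) powr a"
  have P: "0 < Q" unfolding Q_def using assms by auto
  have r: "p * N * (X + 1) < Q * X" unfolding Q_def using R1[OF assms(1,2)] assms(5) by simp
  have "(p * A + h1) * X \<le> p * A * (X + 1)" using assms by (simp add: algebra_simps)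
  then have "(p * A + h1) * X * N \<le> p * A * (X + 1) * N" using assms by (simp add: mult_right_mono)
  also have "\<dots> = A * (p * N * (X + 1))" by (simp add: algebra_simps)
  also have "\<dots> < A * (Q * X)" using r assms by simp
  finally have "(p * A + h1) * N * X < A * Q * X" by (simp add: algebra_simps)
  then have "(p * A + h1) * N < A * Q" using assms(1) by simp
  then show ?thesis using P assms by (simp add: Q_def field_simps)
qed

lemma growth:
  fixes p s :: nat
  assumes "2 \<le> s" "s < p"
  shows "\<exists>K. \<forall>k\<ge>K. s ^ (k + 2) \<le> p ^ k"
proof -
  have "1 < real p / real s" using assms by simp
  then obtain K where K: "real s ^ 2 < (real p / real s) ^ K" using real_arch_pow by blast
  then have "real s ^ 2 * real s ^ K < real p ^ K" using assms by (simp add: power_divide field_simps)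
  then have "real (s ^ (K + 2)) < real (p ^ K)" by (simp add: power_add power2_eq_square mult_ac)
  then have base: "s ^ (K + 2) \<le> p ^ K" by linarith
  have "s ^ (k + 2) \<le> p ^ k" if "K \<le> k" for k
    using that
  proof (induction k rule: dec_induct)
    case base then show ?case using \<open>s ^ (K + 2) \<le> p ^ K\<close> .
  next
    case (step k)
    have "s ^ (Suc k + 2) = s * s ^ (k + 2)" by simp
    also have "\<dots> \<le> s * p ^ k" using step.IH by (rule mult_le_mono2)
    also have "\<dots> \<le> p * p ^ k" using assms by simp
    finally show ?case by simp
  qed
  then show ?thesis by blast
qed

theorem mainTheorem7:
  fixes p s :: nat and A :: "nat set"
  assumes "p \<ge> 3" and "2 \<le> s" and "s < p" and "A \<subseteq> {0..<p}" and "card A = s"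
  shows "(\<exists>N0::nat. \<forall>n>N0.
            (\<forall>j. 1 \<le> j \<and> j + 1 \<le> s - 1 \<longrightarrow>
                 bseq p s A (s * n + (j + 1)) < bseq p s A (s * n + j))
            \<and> bseq p s A (s * n + 1) < bseq p s A n)
       \<and> (\<forall>n\<ge>1. bseq p s A n \<le> bseq p s A (s * n))
       \<and> (\<forall>n\<ge>1. bseq p s A n = bseq p s A (s * n) \<longleftrightarrow> hmap A 0 = 0)"
proof -
  define \<alpha> where "\<alpha> = log (real s) (real p)"
  have s1: "1 < real s" using assms by simp
  have p1: "1 \<le> p" using assms by simp
  have a1: "1 < \<alpha>" unfolding \<alpha>_def using assms s1 by (subst less_log_iff) auto
  have spow: "real s powr \<alpha> = real p" unfolding \<alpha>_def using assms by simp
  have bdef: "\<And>m. bseq p s A m = real (aseq p s A m) / real m powr \<alpha>"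
    unfolding bseq_def \<alpha>_def by simp
  have scale: "\<And>n. real (s * n) powr \<alpha> = real p * real n powr \<alpha>"
    using spow by (simp add: powr_mult)
  have hlt: "\<And>i. i < s \<Longrightarrow> hmap A i < p" using h_props(1)[OF assms(4,5)] .
  have diff: "bseq p s A (s * n) = bseq p s A n + real (hmap A 0) / (real p * real n powr \<alpha>)"
    if n: "1 \<le> n" for n
  proof -
    have rec: "aseq p s A (s * n) = p * aseq p s A n + hmap A 0"
      using arec[OF assms(2), of 0 n p A] n assms(2) by simp
    have N: "0 < real n powr \<alpha>" using n by simp
    show ?thesis unfolding bdef rec scale using N assms by (simp add: field_simps)
  qed
  have P2: "\<forall>n\<ge>1. bseq p s A n \<le> bseq p s A (s * n)"
  proof (intro allI impI)
    fix n :: nat assume "1 \<le> n"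
    then show "bseq p s A n \<le> bseq p s A (s * n)" using diff[of n] by simp
  qed
  have P3: "\<forall>n\<ge>1. bseq p s A n = bseq p s A (s * n) \<longleftrightarrow> hmap A 0 = 0"
  proof (intro allI impI)
    fix n :: nat assume n: "1 \<le> n"
    have "0 < real p * real n powr \<alpha>" using n assms by simp
    then show "bseq p s A n = bseq p s A (s * n) \<longleftrightarrow> hmap A 0 = 0" using diff[OF n] n assms(1) by simp
  qed
  obtain K where K: "\<And>k. K \<le> k \<Longrightarrow> s ^ (k + 2) \<le> p ^ k" using growth[OF assms(2,3)] by blast
  have P1: "\<forall>n>s ^ K.
            (\<forall>j. 1 \<le> j \<and> j + 1 \<le> s - 1 \<longrightarrow>
                 bseq p s A (s * n + (j + 1)) < bseq p s A (s * n + j))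
            \<and> bseq p s A (s * n + 1) < bseq p s A n"
  proof (intro allI impI)
    fix n :: nat assume nK: "s ^ K < n"
    then have n1: "1 \<le> n" by simp
    obtain k where k: "s ^ k \<le> n" "n < s ^ (k + 1)" using ex_power_ivl1[OF assms(2) n1] by blast
    have "s ^ K < s ^ (k + 1)" using nK k(2) by linarith
    then have "K < k + 1" using assms(2) power_less_imp_less_exp[of s K "k+1"] by simp
    then have Kk: "K \<le> k" by simp
    have "s * (n + 1) \<le> s * s ^ (k + 1)" using k(2) by (intro mult_le_mono2) simp
    also have "\<dots> = s ^ (k + 2)" by simp
    also have "\<dots> \<le> p ^ k" using K[OF Kk] .
    also have "\<dots> \<le> aseq p s A n" using alow[OF assms(4,5,2) p1 k(1)] .
    finally have big: "s * n + s \<le> aseq p s A n" by simp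
    define a where "a = aseq p s A n"
    have apos: "0 < a" using big assms(2) unfolding a_def by simp
    have N: "0 < real n powr \<alpha>" using n1 by simp
    have recj: "\<And>j. j < s \<Longrightarrow> aseq p s A (s * n + j) = p * a + hmap A j"
    proof -
      fix j assume "j < s"
      have "1 \<le> s * n" using n1 assms(2) by (simp add: one_le_mult_iff)
      then have "1 \<le> s * n + j" by linarith
      then show "aseq p s A (s * n + j) = p * a + hmap A j"
        unfolding a_def using arec[OF assms(2) \<open>j < s\<close>] by blast
    qed
    have Q1: "bseq p s A (s * n + (j + 1)) < bseq p s A (s * n + j)"
      if j: "1 \<le> j" "j + 1 \<le> s - 1" for j
    proof -
      have js: "j < s" "j + 1 < s" using j by auto
      have "hmap A (j + 1) * (s * n + j) \<le> p * a"
        using hlt[OF js(2)] big js unfolding a_def[symmetric] by (intro mult_le_mono) auto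
      then have hX: "real (hmap A (j + 1)) * real (s * n + j) \<le> real p * real a"
        by (simp only: of_nat_mult[symmetric] of_nat_le_iff)
      have "(real p * real a + real (hmap A (j + 1))) / (real (s * n + j) + 1) powr \<alpha>
            < (real p * real a + real (hmap A j)) / real (s * n + j) powr \<alpha>"
      proof (rule ineq1[OF _ a1 _ _ hX])
        have "0 < s * n + j" using n1 assms(2) by (simp add: one_le_mult_iff)
        then show "0 < real (s * n + j)" by (simp only: of_nat_0_less_iff)
        show "0 < real p * real a" using apos assms by simp
      qed simp
      moreover have "real (s * n + (j + 1)) = real (s * n + j) + 1" by simp
      ultimately show ?thesis unfolding bdef recj[OF js(1)] recj[OF js(2)] by (simp add: add_ac)
    qed
    have Q2: "bseq p s A (s * n + 1) < bseq p s A n"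
    proof -
      have "1 < s" using assms by simp
      then have "hmap A 1 * (s * n) \<le> p * a"
        using hlt[of 1] big unfolding a_def[symmetric] by (intro mult_le_mono) auto
      then have hX: "real (hmap A 1) * real (s * n) \<le> real p * real a"
        by (simp only: of_nat_mult[symmetric] of_nat_le_iff)
      have "(real p * real a + real (hmap A 1)) / (real (s * n) + 1) powr \<alpha>
            < real a / real n powr \<alpha>"
        using ineq2[OF _ a1 _ N scale hX] n1 assms apos by simp
      moreover have "real (s * n + 1) = real (s * n) + 1" by simp
      ultimately have "real (p * a + hmap A 1) / real (s * n + 1) powr \<alpha> < real a / real n powr \<alpha>"
        by (simp add: add_ac)
      moreover have "bseq p s A (s * n + 1) = real (p * a + hmap A 1) / real (s * n + 1) powr \<alpha>"
        using recj[OF \<open>1 < s\<close>] by (simp only: bdef)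
      moreover have "bseq p s A n = real a / real n powr \<alpha>" by (simp add: bdef a_def)
      ultimately show ?thesis by simp
    qed
    show "(\<forall>j. 1 \<le> j \<and> j + 1 \<le> s - 1 \<longrightarrow>
                 bseq p s A (s * n + (j + 1)) < bseq p s A (s * n + j))
            \<and> bseq p s A (s * n + 1) < bseq p s A n" using Q1 Q2 by blast
  qed
  show ?thesis using P1 P2 P3 by blast
qed

end
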